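(* Let $V\subseteq\mathbb{K}[z_1,\ldots,z_n]$ be a $\mathbb{K}$-linear subspace, where $\mathbb{K}=\mathbb{R}$ or $\mathbb{C}$. (i) If $\mathbb{K}=\mathbb{R}$ and every non-zero element of $V$ is real stable, then $\dim V\le 2$. (ii) If $\mathbb{K}=\mathbb{C}$ and every non-zero element of $V$ is stable, then $\dim V\le1$.
   Context: $H=\{z\in\mathbb{C}:\Im(z)>0\}$; a polynomial is stable if it is non-zero whenever all variables lie in $H$; real stable means stable with real coefficients. *)

theory Defs
  imports "HOL-Analysis.Analysis" "HOL-Library.Poly_Mapping"
begin

text \<open>Multivariate polynomials over a ring 'a are represented as finitely supported
  maps from monomials (exponent vectors, finitely supported nat-valued exponent maps, variable i has exponent
  Poly_Mapping.lookup m i) to coefficients.\<close>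

type_synonym 'a mpoly = "(nat \<Rightarrow>\<^sub>0 nat) \<Rightarrow>\<^sub>0 'a"

definition mpolys :: "nat \<Rightarrow> 'a::zero mpoly set" where
  "mpolys n = {p. \<forall>m\<in>Poly_Mapping.keys p. Poly_Mapping.keys m \<subseteq> {..<n}}"

definition mpoly_eval :: "'a::comm_semiring_1 mpoly \<Rightarrow> (nat \<Rightarrow> 'a) \<Rightarrow> 'a" where
  "mpoly_eval p z = (\<Sum>m\<in>Poly_Mapping.keys p. Poly_Mapping.lookup p m * (\<Prod>i\<in>Poly_Mapping.keys m. z i ^ Poly_Mapping.lookup m i))"

definition mpoly_scale :: "'a::comm_semiring_1 \<Rightarrow> 'a mpoly \<Rightarrow> 'a mpoly" where
  "mpoly_scale c p = Poly_Mapping.map (\<lambda>x. c * x) p"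

definition stable :: "nat \<Rightarrow> complex mpoly \<Rightarrow> bool" where
  "stable n p \<longleftrightarrow> (\<forall>z. (\<forall>i<n. Im (z i) > 0) \<longrightarrow> mpoly_eval p z \<noteq> 0)"

definition real_stable :: "nat \<Rightarrow> real mpoly \<Rightarrow> bool" where
  "real_stable n p \<longleftrightarrow> stable n (Poly_Mapping.map complex_of_real p)"

end

theory Submission imports Defs begin

lemma lookup_map0: "g 0 = 0 \<Longrightarrow> Poly_Mapping.lookup (Poly_Mapping.map g p) k = g (Poly_Mapping.lookup p k)"
  by transfer (auto simp: when_def)

lemma lookup_scale: "Poly_Mapping.lookup (mpoly_scale c p) k = c * Poly_Mapping.lookup p k"
  by (simp add: mpoly_scale_def lookup_map0)

lemma vs: "vector_space (mpoly_scale :: 'a::field \<Rightarrow> 'a mpoly \<Rightarrow> 'a mpoly)"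
  by unfold_locales (auto intro!: poly_mapping_eqI simp: lookup_scale lookup_add algebra_simps)

definition mono_ev :: "(nat \<Rightarrow>\<^sub>0 nat) \<Rightarrow> (nat \<Rightarrow> 'a::comm_semiring_1) \<Rightarrow> 'a" where
  "mono_ev m z = (\<Prod>i\<in>Poly_Mapping.keys m. z i ^ Poly_Mapping.lookup m i)"

lemma eval_superset:
  assumes "finite S" "Poly_Mapping.keys p \<subseteq> S"
  shows "mpoly_eval p z = (\<Sum>m\<in>S. Poly_Mapping.lookup p m * mono_ev m z)"
  unfolding mpoly_eval_def mono_ev_def
  by (rule sum.mono_neutral_left) (use assms in \<open>auto simp: in_keys_iff\<close>)

lemma eval_add: "mpoly_eval (p + q) z = mpoly_eval p z + mpoly_eval q z"
proof -
  let ?S = "Poly_Mapping.keys p \<union> Poly_Mapping.keys q"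
  have "Poly_Mapping.keys (p+q) \<subseteq> ?S" by (rule keys_add)
  then show ?thesis
    by (simp add: eval_superset[of ?S] lookup_add distrib_right sum.distrib)
qed

lemma eval_scale: "mpoly_eval (mpoly_scale c p) z = c * mpoly_eval p z"
proof -
  have "Poly_Mapping.keys (mpoly_scale c p) \<subseteq> Poly_Mapping.keys p"
    by (auto simp: in_keys_iff lookup_scale)
  then show ?thesis
    by (simp add: eval_superset[of "Poly_Mapping.keys p"] lookup_scale sum_distrib_left mult.assoc)
qed

lemma eval_zero: "mpoly_eval 0 z = 0"
  by (simp add: mpoly_eval_def)

lemma map_add_cor: "Poly_Mapping.map complex_of_real (p + q) = Poly_Mapping.map complex_of_real p + Poly_Mapping.map complex_of_real q"
  by (rule poly_mapping_eqI) (simp add: lookup_map0 lookup_add)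

lemma map_scale_cor: "Poly_Mapping.map complex_of_real (mpoly_scale c p) = mpoly_scale (complex_of_real c) (Poly_Mapping.map complex_of_real p)"
  by (rule poly_mapping_eqI) (simp add: lookup_map0 lookup_scale)

lemma real_comb:
  fixes x y w :: complex
  shows "\<exists>a b c::real. (a \<noteq> 0 \<or> b \<noteq> 0 \<or> c \<noteq> 0) \<and> of_real a * x + of_real b * y + of_real c * w = 0"
proof (cases "x = 0")
  case True then show ?thesis by (intro exI[of _ 1] exI[of _ 0]) auto
next
  case False
  define y' where "y' = y / x"
  define w' where "w' = w / x"
  have y: "y = y' * x" and w: "w = w' * x" using False by (auto simp: y'_def w'_def)
  show ?thesis
  proof (cases "Im y' = 0")
    case True
    have "of_real (Re y') = y'" using True by (simp add: complex_eq_iff)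
    then show ?thesis
      by (intro exI[of _ "Re y'"] exI[of _ "-1"] exI[of _ 0]) (auto simp: y)
  next
    case F: False
    define r where "r = Im w' * Re y' - Im y' * Re w'"
    have "of_real (- r) + of_real (Im w') * y' + of_real (- Im y') * w' = 0"
      by (simp add: complex_eq_iff r_def)
    then have "(of_real (- r) + of_real (Im w') * y' + of_real (- Im y') * w') * x = 0" by simp
    then show ?thesis using F
      by (intro exI[of _ "-r"] exI[of _ "Im w'"] exI[of _ "- Im y'"]) (auto simp: y w algebra_simps)
  qed
qed

lemma three_elems:
  assumes "\<not> (finite B \<and> card B \<le> 2)"
  obtains p q r where "p \<in> B" "q \<in> B" "r \<in> B" "p \<noteq> q" "p \<noteq> r" "q \<noteq> r"
proof -
  have "\<exists>S\<subseteq>B. card S = 3"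
  proof (cases "finite B")
    case True then show ?thesis using assms ex_card[of 3 B] by auto
  next
    case False then show ?thesis using infinite_arbitrarily_large[of B 3] by auto
  qed
  then obtain S where "S \<subseteq> B" "card S = Suc (Suc (Suc 0))" by (auto simp: numeral_3_eq_3)
  then obtain x y w where "S = {x,y,w}" "x \<noteq> y" "x \<noteq> w" "y \<noteq> w"
    by (auto simp: card_Suc_eq)
  then show ?thesis using that \<open>S \<subseteq> B\<close> by auto
qed

lemma two_elems:
  assumes "\<not> (finite B \<and> card B \<le> 1)"
  obtains p q where "p \<in> B" "q \<in> B" "p \<noteq> q"
proof -
  have "\<exists>S\<subseteq>B. card S = 2"
  proof (cases "finite B")
    case True then show ?thesis using assms ex_card[of 2 B] by auto
  next
    case False then show ?thesis using infinite_arbitrarily_large[of B 2] by auto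
  qed
  then obtain S where "S \<subseteq> B" "card S = Suc (Suc 0)" by (auto simp: numeral_2_eq_2)
  then show ?thesis using that by (auto simp: card_Suc_eq)
qed

lemma dim_bound:
  fixes V :: "'a::field mpoly set"
  assumes sub: "module.subspace mpoly_scale V"
    and ind: "\<And>B. B \<subseteq> V \<Longrightarrow> \<not> module.dependent mpoly_scale B \<Longrightarrow> finite B \<and> card B \<le> k"
  shows "(\<exists>B. finite B \<and> module.span mpoly_scale B = V) \<and> vector_space.dim mpoly_scale V \<le> k"
proof -
  interpret vector_space "mpoly_scale :: 'a \<Rightarrow> 'a mpoly \<Rightarrow> 'a mpoly" by (rule vs)
  obtain B where B: "B \<subseteq> V" "independent B" "V \<subseteq> span B" "card B = dim V"
    by (rule basis_exists)
  have "span B = V" using span_subspace[OF B(1) B(3) sub] .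
  then show ?thesis using ind[OF B(1,2)] B(4) by auto
qed


theorem lemma3p2:
  fixes n :: nat and V :: "real mpoly set" and W :: "complex mpoly set"
  shows "(V \<subseteq> mpolys n \<and> module.subspace mpoly_scale V
            \<and> (\<forall>p\<in>V. p \<noteq> 0 \<longrightarrow> real_stable n p)
           \<longrightarrow> (\<exists>B. finite B \<and> module.span mpoly_scale B = V)
              \<and> vector_space.dim mpoly_scale V \<le> 2)
       \<and> (W \<subseteq> mpolys n \<and> module.subspace mpoly_scale W
            \<and> (\<forall>p\<in>W. p \<noteq> 0 \<longrightarrow> stable n p)
           \<longrightarrow> (\<exists>B. finite B \<and> module.span mpoly_scale B = W)
              \<and> vector_space.dim mpoly_scale W \<le> 1)"
proof (rule conjI; rule impI)
  define z :: "nat \<Rightarrow> complex" where "z = (\<lambda>_. \<i>)"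
  have zI: "\<forall>i<n. Im (z i) > 0" by (simp add: z_def)
  let ?E = "\<lambda>p::real mpoly. mpoly_eval (Poly_Mapping.map complex_of_real p) z"
  {
    assume A: "V \<subseteq> mpolys n \<and> module.subspace mpoly_scale V \<and> (\<forall>p\<in>V. p \<noteq> 0 \<longrightarrow> real_stable n p)"
    interpret R: vector_space "mpoly_scale :: real \<Rightarrow> real mpoly \<Rightarrow> real mpoly" by (rule vs)
    show "(\<exists>B. finite B \<and> module.span mpoly_scale B = V) \<and> vector_space.dim mpoly_scale V \<le> 2"
    proof (rule dim_bound)
      show "module.subspace mpoly_scale V" using A by blast
      fix B assume BV: "B \<subseteq> V" and ind: "R.independent B"
      show "finite B \<and> card B \<le> 2"
      proof (rule ccontr)
        assume "\<not> (finite B \<and> card B \<le> 2)"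
        then obtain p q r where pqr: "p \<in> B" "q \<in> B" "r \<in> B" "p \<noteq> q" "p \<noteq> r" "q \<noteq> r"
          by (rule three_elems)
        obtain a b c :: real where abc: "a \<noteq> 0 \<or> b \<noteq> 0 \<or> c \<noteq> 0"
          and eq: "of_real a * ?E p + of_real b * ?E q + of_real c * ?E r = 0"
          using real_comb by blast
        define P where "P = mpoly_scale a p + mpoly_scale b q + mpoly_scale c r"
        define u where "u = (\<lambda>v. if v = p then a else if v = q then b else c)"
        have sum: "(\<Sum>v\<in>{p,q,r}. mpoly_scale (u v) v) = P"
          using pqr by (simp add: u_def P_def algebra_simps)
        have "P \<noteq> 0"
        proof
          assume "P = 0"
          then have "u v = 0" if "v \<in> {p,q,r}" for v
            using R.independentD[OF ind, of "{p,q,r}" u v] sum pqr that by auto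
          then have "a = 0" "b = 0" "c = 0" using pqr
            by (metis (full_types) insertI1 insertI2 u_def)+
          then show False using abc by simp
        qed
        moreover have "P \<in> V" unfolding P_def using A BV pqr
          by (intro R.subspace_add R.subspace_scale) auto
        ultimately have "real_stable n P" using A by blast
        then have "mpoly_eval (Poly_Mapping.map complex_of_real P) z \<noteq> 0"
          using zI by (auto simp: real_stable_def stable_def)
        moreover have "mpoly_eval (Poly_Mapping.map complex_of_real P) z = 0"
          unfolding P_def map_add_cor map_scale_cor eval_add eval_scale using eq .
        ultimately show False by contradiction
      qed
    qed
  }
  {
    assume A: "W \<subseteq> mpolys n \<and> module.subspace mpoly_scale W \<and> (\<forall>p\<in>W. p \<noteq> 0 \<longrightarrow> stable n p)"
    interpret C: vector_space "mpoly_scale :: complex \<Rightarrow> complex mpoly \<Rightarrow> complex mpoly" by (rule vs)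
    show "(\<exists>B. finite B \<and> module.span mpoly_scale B = W) \<and> vector_space.dim mpoly_scale W \<le> 1"
    proof (rule dim_bound)
      show "module.subspace mpoly_scale W" using A by blast
      fix B assume BW: "B \<subseteq> W" and ind: "C.independent B"
      show "finite B \<and> card B \<le> 1"
      proof (rule ccontr)
        assume "\<not> (finite B \<and> card B \<le> 1)"
        then obtain p q where pq: "p \<in> B" "q \<in> B" "p \<noteq> q"
          by (rule two_elems)
        have "p \<noteq> 0" using C.dependent_zero ind pq by blast
        then have "stable n p" using A BW pq by blast
        then have pz: "mpoly_eval p z \<noteq> 0" using zI by (auto simp: stable_def)
        define a where "a = mpoly_eval q z"
        define b where "b = - mpoly_eval p z"
        define P where "P = mpoly_scale a p + mpoly_scale b q"
        define u where "u = (\<lambda>v. if v = p then a else b)"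
        have sum: "(\<Sum>v\<in>{p,q}. mpoly_scale (u v) v) = P"
          using pq by (simp add: u_def P_def algebra_simps)
        have "P \<noteq> 0"
        proof
          assume "P = 0"
          then have "u q = 0"
            using C.independentD[OF ind, of "{p,q}" u q] sum pq by auto
          then show False using pz pq by (auto simp: u_def b_def)
        qed
        moreover have "P \<in> W" unfolding P_def using A BW pq
          by (intro C.subspace_add C.subspace_scale) auto
        ultimately have "stable n P" using A by blast
        then have "mpoly_eval P z \<noteq> 0" using zI by (auto simp: stable_def)
        moreover have "mpoly_eval P z = 0"
          unfolding P_def eval_add eval_scale a_def b_def by simp
        ultimately show False by contradiction
      qed
    qed
  }
qed

end
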